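(* Assume $\|\Sigma_1\|\le C$ for a universal constant $C$ and $p,n\to\infty$ with $p/n\to c\in(0,\infty)$. Then $$\frac1p\,\mathbb E\|\mathbf M_2\|_F^2\to0 .$$
   Context: Setting. For each $n$, let $p=p_n$ and $\mathbf x_1,\dots,\mathbf x_n\in\mathbb R^p$ i.i.d. with an absolutely continuous distribution. $\mathbf A_{ij}=\operatorname{sign}(\mathbf x_i-\mathbf x_j)$ (componentwise sign), $\mathbf A_i=\mathbb E\{\operatorname{sign}(\mathbf x_i-\mathbf x)\mid\mathbf x_i\}$ with $\mathbf x$ an independent copy of $\mathbf x_1$, $\Sigma_1=\operatorname{cov}(\mathbf A_{ij})$ ($i\ne j$), $\Sigma_2=\operatorname{cov}(\mathbf A_i)$, $\Sigma_3=\Sigma_1-2\Sigma_2$. Define $\epsilon_{ij}=\mathbf A_{ij}-\mathbf A_i+\mathbf A_j$ and $\mathbf M_2=\frac{2}{n(n-1)}\sum_{1\le i<j\le n}(\mathbf A_i-\mathbf A_j)\epsilon_{ij}^{\top}$. $\|\cdot\|$ is the spectral norm and $\|\cdot\|_F$ the Frobenius norm. *)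

theory Defs
  imports "HOL-Probability.Probability"
begin

text \<open>Vectors in R^p are functions nat => real, only the components k < p matter;
  points of R^p live in the space of PiM {..<p} (lambda _. borel).
  p x p matrices are functions nat => nat => real, entries with k, l < p.\<close>

definition sign_vec :: "(nat \<Rightarrow> real) \<Rightarrow> (nat \<Rightarrow> real) \<Rightarrow> nat \<Rightarrow> real" where
  "sign_vec x y = (\<lambda>k. sgn (x k - y k))"

definition A_fun :: "(nat \<Rightarrow> real) measure \<Rightarrow> (nat \<Rightarrow> real) \<Rightarrow> nat \<Rightarrow> real" where
  "A_fun \<mu> y = (\<lambda>k. \<integral>x. sgn (y k - x k) \<partial>\<mu>)"

definition eps_fun :: "(nat \<Rightarrow> real) measure \<Rightarrow> (nat \<Rightarrow> real) \<Rightarrow> (nat \<Rightarrow> real) \<Rightarrow> nat \<Rightarrow> real" where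
  "eps_fun \<mu> xi xj = (\<lambda>k. sign_vec xi xj k - A_fun \<mu> xi k + A_fun \<mu> xj k)"

definition M2 :: "(nat \<Rightarrow> real) measure \<Rightarrow> nat \<Rightarrow> (nat \<Rightarrow> (nat \<Rightarrow> real)) \<Rightarrow> nat \<Rightarrow> nat \<Rightarrow> real" where
  "M2 \<mu> n xs = (\<lambda>k l. 2 / (real n * (real n - 1)) *
      (\<Sum>j<n. \<Sum>i<j. (A_fun \<mu> (xs i) k - A_fun \<mu> (xs j) k) * eps_fun \<mu> (xs i) (xs j) l))"

definition Sigma1 :: "(nat \<Rightarrow> real) measure \<Rightarrow> nat \<Rightarrow> nat \<Rightarrow> real" where
  "Sigma1 \<mu> = (\<lambda>k l.
      (\<integral>z. sign_vec (fst z) (snd z) k * sign_vec (fst z) (snd z) l \<partial>(\<mu> \<Otimes>\<^sub>M \<mu>))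
      - (\<integral>z. sign_vec (fst z) (snd z) k \<partial>(\<mu> \<Otimes>\<^sub>M \<mu>))
        * (\<integral>z. sign_vec (fst z) (snd z) l \<partial>(\<mu> \<Otimes>\<^sub>M \<mu>)))"

definition spec_norm :: "nat \<Rightarrow> (nat \<Rightarrow> nat \<Rightarrow> real) \<Rightarrow> real" where
  "spec_norm p M = Sup {sqrt (\<Sum>k<p. (\<Sum>l<p. M k l * v l)\<^sup>2) | v. (\<Sum>l<p. (v l)\<^sup>2) = 1}"

definition frob_norm :: "nat \<Rightarrow> (nat \<Rightarrow> nat \<Rightarrow> real) \<Rightarrow> real" where
  "frob_norm p M = sqrt (\<Sum>k<p. \<Sum>l<p. (M k l)\<^sup>2)"

end

theory Submission
  imports Defs "HOL-Analysis.Analysis" "HOL-Real_Asymp.Real_Asymp"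
begin


lemma pi_step:
  fixes G :: "('i \<Rightarrow> 'a) \<Rightarrow> real"
  assumes M: "prob_space M" and fin: "finite I" and i: "i \<in> I"
    and G: "G \<in> borel_measurable (PiM I (\<lambda>_. M))" and B: "\<And>x. \<bar>G x\<bar> \<le> B"
  shows "(\<integral>x. G x \<partial>PiM I (\<lambda>_. M)) = (\<integral>x. (\<integral>y. G (x(i:=y)) \<partial>M) \<partial>PiM (I - {i}) (\<lambda>_. M))"
proof -
  interpret product_prob_space "\<lambda>_. M" I
    by (simp add: product_prob_space_def product_prob_space_axioms_def product_sigma_finite_def M prob_space_imp_sigma_finite)
  have I: "insert i (I - {i}) = I" using i by auto
  interpret P: prob_space "PiM I (\<lambda>_. M)" by (rule prob_space_PiM) (rule M)
  have int: "integrable (PiM I (\<lambda>_. M)) G"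
    by (rule P.integrable_const_bound[where B=B]) (use B G in auto)
  show ?thesis
    using product_integral_insert[of "I - {i}" i G] int fin I by simp
qed

lemma abs_int_bound:
  fixes f :: "'a \<Rightarrow> real"
  assumes "prob_space M" "\<And>x. \<bar>f x\<bar> \<le> B"
  shows "\<bar>\<integral>x. f x \<partial>M\<bar> \<le> B"
proof -
  interpret prob_space M by fact
  have "\<bar>\<integral>x. f x \<partial>M\<bar> \<le> \<integral>x. \<bar>f x\<bar> \<partial>M" by (rule integral_abs_bound)
  also have "\<dots> \<le> \<integral>x. B \<partial>M"
    by (rule integral_mono_AE') (use assms order.trans[OF abs_ge_zero assms(2)] in auto)
  also have "\<dots> = B" using prob_space by simp
  finally show ?thesis .
qed

lemma int3:
  fixes F :: "'a \<times> 'a \<times> 'a \<Rightarrow> real"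
  assumes M: "prob_space M" and fin: "finite I" and abc: "a \<in> I" "b \<in> I" "c \<in> I"
    "a \<noteq> b" "a \<noteq> c" "b \<noteq> c"
    and F[measurable]: "F \<in> borel_measurable (M \<Otimes>\<^sub>M M \<Otimes>\<^sub>M M)" and B: "\<And>z. \<bar>F z\<bar> \<le> B"
  shows "(\<integral>xs. F (xs a, xs b, xs c) \<partial>PiM I (\<lambda>_. M)) =
     (\<integral>z. \<integral>y. \<integral>x. F (x, y, z) \<partial>M \<partial>M \<partial>M)"
proof -
  interpret prob_space M by (rule M)
  have B1: "\<And>y z. \<bar>\<integral>x. F (x, y, z) \<partial>M\<bar> \<le> B" by (rule abs_int_bound[OF M B])
  have B2: "\<And>z. \<bar>\<integral>y. \<integral>x. F (x, y, z) \<partial>M \<partial>M\<bar> \<le> B" by (rule abs_int_bound[OF M B1])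
  have "(\<integral>xs. F (xs a, xs b, xs c) \<partial>PiM I (\<lambda>_. M)) =
     (\<integral>xs. (\<integral>x. F (x, xs b, xs c) \<partial>M) \<partial>PiM (I - {a}) (\<lambda>_. M))"
    using pi_step[OF M fin abc(1), of "\<lambda>xs. F (xs a, xs b, xs c)" B] abc B by simp
  also have "\<dots> = (\<integral>xs. (\<integral>y. \<integral>x. F (x, y, xs c) \<partial>M \<partial>M) \<partial>PiM (I - {a} - {b}) (\<lambda>_. M))"
    using pi_step[OF M _ _ , of "I - {a}" b "\<lambda>xs. (\<integral>x. F (x, xs b, xs c) \<partial>M)" B] abc B1 fin by simp
  also have "\<dots> = (\<integral>xs. (\<integral>z. \<integral>y. \<integral>x. F (x, y, z) \<partial>M \<partial>M \<partial>M) \<partial>PiM (I - {a} - {b} - {c}) (\<lambda>_. M))"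
    using pi_step[OF M _ _ , of "I - {a} - {b}" c "\<lambda>xs. (\<integral>y. \<integral>x. F (x, y, xs c) \<partial>M \<partial>M)" B] abc B2 fin by simp
  also have "\<dots> = (\<integral>z. \<integral>y. \<integral>x. F (x, y, z) \<partial>M \<partial>M \<partial>M)"
  proof -
    interpret P: prob_space "PiM (I - {a} - {b} - {c}) (\<lambda>_. M)" by (rule prob_space_PiM) (rule M)
    show ?thesis using P.prob_space by simp
  qed
  finally show ?thesis .
qed

lemma int4:
  fixes F :: "'a \<times> 'a \<times> 'a \<times> 'a \<Rightarrow> real"
  assumes M: "prob_space M" and fin: "finite I" and abc: "a \<in> I" "b \<in> I" "c \<in> I" "d \<in> I"
    "a \<noteq> b" "a \<noteq> c" "b \<noteq> c" "a \<noteq> d" "b \<noteq> d" "c \<noteq> d"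
    and F[measurable]: "F \<in> borel_measurable (M \<Otimes>\<^sub>M M \<Otimes>\<^sub>M M \<Otimes>\<^sub>M M)" and B: "\<And>z. \<bar>F z\<bar> \<le> B"
  shows "(\<integral>xs. F (xs a, xs b, xs c, xs d) \<partial>PiM I (\<lambda>_. M)) =
     (\<integral>w. \<integral>z. \<integral>y. \<integral>x. F (x, y, z, w) \<partial>M \<partial>M \<partial>M \<partial>M)"
proof -
  interpret prob_space M by (rule M)
  have B1: "\<And>y z w. \<bar>\<integral>x. F (x, y, z, w) \<partial>M\<bar> \<le> B" by (rule abs_int_bound[OF M B])
  have B2: "\<And>z w. \<bar>\<integral>y. \<integral>x. F (x, y, z, w) \<partial>M \<partial>M\<bar> \<le> B" by (rule abs_int_bound[OF M B1])
  have B3: "\<And>w. \<bar>\<integral>z. \<integral>y. \<integral>x. F (x, y, z, w) \<partial>M \<partial>M \<partial>M\<bar> \<le> B" by (rule abs_int_bound[OF M B2])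
  have "(\<integral>xs. F (xs a, xs b, xs c, xs d) \<partial>PiM I (\<lambda>_. M)) =
     (\<integral>xs. (\<integral>x. F (x, xs b, xs c, xs d) \<partial>M) \<partial>PiM (I - {a}) (\<lambda>_. M))"
    using pi_step[OF M fin abc(1), of "\<lambda>xs. F (xs a, xs b, xs c, xs d)" B] abc B by simp
  also have "\<dots> = (\<integral>xs. (\<integral>y. \<integral>x. F (x, y, xs c, xs d) \<partial>M \<partial>M) \<partial>PiM (I - {a} - {b}) (\<lambda>_. M))"
    using pi_step[OF M _ _ , of "I - {a}" b "\<lambda>xs. (\<integral>x. F (x, xs b, xs c, xs d) \<partial>M)" B] abc B1 fin by simp
  also have "\<dots> = (\<integral>xs. (\<integral>z. \<integral>y. \<integral>x. F (x, y, z, xs d) \<partial>M \<partial>M \<partial>M) \<partial>PiM (I - {a} - {b} - {c}) (\<lambda>_. M))"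
    using pi_step[OF M _ _ , of "I - {a} - {b}" c "\<lambda>xs. (\<integral>y. \<integral>x. F (x, y, xs c, xs d) \<partial>M \<partial>M)" B] abc B2 fin by simp
  also have "\<dots> = (\<integral>xs. (\<integral>w. \<integral>z. \<integral>y. \<integral>x. F (x, y, z, w) \<partial>M \<partial>M \<partial>M \<partial>M) \<partial>PiM (I - {a} - {b} - {c} - {d}) (\<lambda>_. M))"
    using pi_step[OF M _ _ , of "I - {a} - {b} - {c}" d "\<lambda>xs. (\<integral>z. \<integral>y. \<integral>x. F (x, y, z, xs d) \<partial>M \<partial>M \<partial>M)" B] abc B3 fin by simp
  also have "\<dots> = (\<integral>w. \<integral>z. \<integral>y. \<integral>x. F (x, y, z, w) \<partial>M \<partial>M \<partial>M \<partial>M)"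
  proof -
    interpret P: prob_space "PiM (I - {a} - {b} - {c} - {d}) (\<lambda>_. M)" by (rule prob_space_PiM) (rule M)
    show ?thesis using P.prob_space by simp
  qed
  finally show ?thesis .
qed



lemma bint:
  fixes f :: "'a \<Rightarrow> real"
  assumes "prob_space M" "f \<in> borel_measurable M" "\<And>x. \<bar>f x\<bar> \<le> B"
  shows "integrable M f"
proof -
  interpret prob_space M by fact
  show ?thesis by (rule integrable_const_bound[where B=B]) (use assms in auto)
qed

locale S = fixes \<mu> :: "(nat\<Rightarrow>real) measure" and p :: nat
  assumes prob: "prob_space \<mu>" and sets_eq[measurable_cong]: "sets \<mu> = sets (PiM {..<p} (\<lambda>_. borel))"
begin
interpretation prob_space \<mu> by (rule prob)
interpretation PP: pair_prob_space \<mu> \<mu> by unfold_locales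

definition "a y k = A_fun \<mu> y k"
definition "e x y l = eps_fun \<mu> x y l"
definition "h x y k l = (a x k - a y k) * e x y l"
definition "g x k l = (\<integral>y. h x y k l \<partial>\<mu>)"

lemma comp_meas[measurable]: "k < p \<Longrightarrow> (\<lambda>y. y k) \<in> borel_measurable \<mu>"
  by measurable

lemma A_meas[measurable]: "k < p \<Longrightarrow> (\<lambda>y. a y k) \<in> borel_measurable \<mu>"
  unfolding a_def A_fun_def by measurable

lemma e_meas[measurable]: "l < p \<Longrightarrow> (\<lambda>z. e (fst z) (snd z) l) \<in> borel_measurable (\<mu> \<Otimes>\<^sub>M \<mu>)"
  unfolding e_def eps_fun_def sign_vec_def a_def[symmetric] by measurable

lemma h_meas[measurable]: "k < p \<Longrightarrow> l < p \<Longrightarrow> (\<lambda>z. h (fst z) (snd z) k l) \<in> borel_measurable (\<mu> \<Otimes>\<^sub>M \<mu>)"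
  unfolding h_def by measurable

lemma sgn_sw: "sgn (v - u::real) = - sgn (u - v)"
  by (simp add: sgn_if)

lemma abs_sgn_le: "\<bar>sgn (r::real)\<bar> \<le> 1" by (simp add: abs_sgn)

lemma a_bound: "\<bar>a y k\<bar> \<le> 1"
  unfolding a_def A_fun_def by (rule abs_int_bound[OF prob]) (rule abs_sgn_le)

lemma e_bound: "\<bar>e x y l\<bar> \<le> 3"
proof -
  have "\<bar>sgn (x l - y l)::real\<bar> \<le> 1" by (rule abs_sgn_le)
  with a_bound[of x l] a_bound[of y l] show ?thesis
    unfolding e_def eps_fun_def sign_vec_def a_def by linarith
qed

lemma h_bound: "\<bar>h x y k l\<bar> \<le> 6"
proof -
  have "\<bar>h x y k l\<bar> = \<bar>a x k - a y k\<bar> * \<bar>e x y l\<bar>" by (simp add: h_def abs_mult)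
  also have "\<dots> \<le> 2 * 3"
    by (rule mult_mono) (use a_bound[of x k] a_bound[of y k] e_bound[of x y l] in auto)
  finally show ?thesis by simp
qed

lemma e_swap: "e y x l = - e x y l"
  unfolding e_def eps_fun_def sign_vec_def
  by (simp add: sgn_sw[of "x l"])

lemma h_swap: "h y x k l = h x y k l"
  by (simp only: h_def e_swap[of y x]) (simp add: algebra_simps)

lemma a_mean: assumes k: "k < p" shows "(\<integral>y. a y k \<partial>\<mu>) = 0"
proof -
  define f where "f = (\<lambda>y x. sgn (y k - x k) :: real)"
  have fm: "case_prod f \<in> borel_measurable (\<mu> \<Otimes>\<^sub>M \<mu>)" unfolding f_def using k by measurable
  have fi: "integrable (\<mu> \<Otimes>\<^sub>M \<mu>) (case_prod f)"
    by (rule bint[OF PP.prob_space_axioms fm, of 1]) (auto simp: f_def abs_sgn_le)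
  have "(\<integral>y. a y k \<partial>\<mu>) = (\<integral>y. \<integral>x. f y x \<partial>\<mu> \<partial>\<mu>)" by (simp add: a_def A_fun_def f_def)
  also have "\<dots> = (\<integral>x. \<integral>y. f y x \<partial>\<mu> \<partial>\<mu>)" by (rule PP.Fubini_integral[OF fi, symmetric])
  also have "\<dots> = (\<integral>x. \<integral>y. - f x y \<partial>\<mu> \<partial>\<mu>)"
    by (rule Bochner_Integration.integral_cong[OF refl], rule Bochner_Integration.integral_cong[OF refl]) (simp add: f_def sgn_if)
  also have "\<dots> = - (\<integral>y. a y k \<partial>\<mu>)" by (simp add: a_def A_fun_def f_def)
  finally show ?thesis by simp
qed

lemma e_mean: assumes l: "l < p" shows "(\<integral>y. e x y l \<partial>\<mu>) = 0"
proof -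
  have i1: "integrable \<mu> (\<lambda>y. sgn (x l - y l) :: real)"
    by (rule bint[OF prob, of _ 1]) (use l in \<open>auto simp: abs_sgn_le\<close>)
  have i2: "integrable \<mu> (\<lambda>y. a y l)"
    by (rule bint[OF prob, of _ 1]) (use l a_bound in auto)
  have "(\<integral>y. e x y l \<partial>\<mu>) = (\<integral>y. sgn (x l - y l) \<partial>\<mu>) - a x l + (\<integral>y. a y l \<partial>\<mu>)"
    unfolding e_def eps_fun_def sign_vec_def a_def[symmetric]
    using i1 i2 prob_space by simp
  also have "\<dots> = 0" using a_mean[OF l] by (simp add: a_def A_fun_def)
  finally show ?thesis .
qed


lemma Sig_bound: "\<bar>Sigma1 \<mu> k l\<bar> \<le> 2"
proof -
  have b1: "\<bar>sign_vec (fst z) (snd z) k\<bar> \<le> 1" for z k unfolding sign_vec_def by (rule abs_sgn_le)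
  have i1: "\<bar>\<integral>z. sign_vec (fst z) (snd z) k * sign_vec (fst z) (snd z) l \<partial>(\<mu> \<Otimes>\<^sub>M \<mu>)\<bar> \<le> 1"
    by (rule abs_int_bound[OF PP.prob_space_axioms]) (simp add: abs_mult mult_le_one b1)
  have i2: "\<bar>\<integral>z. sign_vec (fst z) (snd z) k \<partial>(\<mu> \<Otimes>\<^sub>M \<mu>)\<bar> \<le> 1" for k
    by (rule abs_int_bound[OF PP.prob_space_axioms]) (rule b1)
  have "\<bar>(\<integral>z. sign_vec (fst z) (snd z) k \<partial>(\<mu> \<Otimes>\<^sub>M \<mu>)) * (\<integral>z. sign_vec (fst z) (snd z) l \<partial>(\<mu> \<Otimes>\<^sub>M \<mu>))\<bar> \<le> 1"
    by (simp add: abs_mult mult_le_one i2)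
  with i1 show ?thesis unfolding Sigma1_def by linarith
qed

lemma spec_bdd: "bdd_above {sqrt (\<Sum>k<p. (\<Sum>l<p. Sigma1 \<mu> k l * v l)\<^sup>2) | v. (\<Sum>l<p. (v l)\<^sup>2) = 1}"
proof (rule bdd_aboveI, safe)
  fix v :: "nat \<Rightarrow> real" assume v: "(\<Sum>l<p. (v l)\<^sup>2) = 1"
  have vl: "\<bar>v l\<bar> \<le> 1" if "l < p" for l
  proof -
    have "(v l)\<^sup>2 \<le> (\<Sum>l<p. (v l)\<^sup>2)" by (rule member_le_sum) (use that in auto)
    then have "(v l)\<^sup>2 \<le> 1\<^sup>2" using v by simp
    then show ?thesis using abs_le_square_iff[of "v l" 1] by simp
  qed
  have rk: "\<bar>\<Sum>l<p. Sigma1 \<mu> k l * v l\<bar> \<le> 2 * real p" for k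
  proof -
    have "\<bar>\<Sum>l<p. Sigma1 \<mu> k l * v l\<bar> \<le> (\<Sum>l<p. \<bar>Sigma1 \<mu> k l * v l\<bar>)" by (rule sum_abs)
    also have "\<dots> \<le> (\<Sum>l<p. 2)"
    proof (rule sum_mono)
      fix l assume l: "l \<in> {..<p}"
      have "\<bar>Sigma1 \<mu> k l\<bar> * \<bar>v l\<bar> \<le> 2 * 1"
        by (rule mult_mono[OF Sig_bound]) (use vl l in auto)
      then show "\<bar>Sigma1 \<mu> k l * v l\<bar> \<le> 2" by (simp add: abs_mult)
    qed
    finally show ?thesis by simp
  qed
  have "(\<Sum>k<p. (\<Sum>l<p. Sigma1 \<mu> k l * v l)\<^sup>2) \<le> (\<Sum>k<p. (2 * real p)\<^sup>2)"
  proof (rule sum_mono)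
    fix k
    have "\<bar>\<Sum>l<p. Sigma1 \<mu> k l * v l\<bar> \<le> \<bar>2 * real p\<bar>" using rk[of k] by simp
    then show "(\<Sum>l<p. Sigma1 \<mu> k l * v l)\<^sup>2 \<le> (2 * real p)\<^sup>2" by (simp only: abs_le_square_iff)
  qed
  then show "sqrt (\<Sum>k<p. (\<Sum>l<p. Sigma1 \<mu> k l * v l)\<^sup>2) \<le> sqrt (\<Sum>k<p. (2 * real p)\<^sup>2)"
    by (rule real_sqrt_le_mono)
qed

lemma spec_apply:
  assumes bound: "spec_norm p (Sigma1 \<mu>) \<le> C"
  shows "sqrt (\<Sum>k<p. (\<Sum>l<p. Sigma1 \<mu> k l * v l)\<^sup>2) \<le> C * sqrt (\<Sum>l<p. (v l)\<^sup>2)"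
proof (cases "(\<Sum>l<p. (v l)\<^sup>2) = 0")
  case True
  then have "\<forall>l\<in>{..<p}. (v l)\<^sup>2 = 0" by (subst (asm) sum_nonneg_eq_0_iff) auto
  then show ?thesis by simp
next
  case False
  define r where "r = sqrt (\<Sum>l<p. (v l)\<^sup>2)"
  have r: "r > 0" using False unfolding r_def by (simp add: sum_nonneg order.not_eq_order_implies_strict)
  define u where "u l = v l / r" for l
  have "(\<Sum>l<p. (u l)\<^sup>2) = (\<Sum>l<p. (v l)\<^sup>2) / r\<^sup>2"
    by (simp add: u_def power_divide sum_divide_distrib)
  also have "\<dots> = 1" using r False unfolding r_def by (simp add: sum_nonneg)
  finally have u1: "(\<Sum>l<p. (u l)\<^sup>2) = 1" .
  have le: "sqrt (\<Sum>k<p. (\<Sum>l<p. Sigma1 \<mu> k l * u l)\<^sup>2) \<le> spec_norm p (Sigma1 \<mu>)"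
    unfolding spec_norm_def by (rule cSup_upper[OF _ spec_bdd]) (use u1 in blast)
  have eq: "(\<Sum>l<p. Sigma1 \<mu> k l * v l) = r * (\<Sum>l<p. Sigma1 \<mu> k l * u l)" for k
    using r by (simp add: u_def sum_distrib_left)
  have "sqrt (\<Sum>k<p. (\<Sum>l<p. Sigma1 \<mu> k l * v l)\<^sup>2) = r * sqrt (\<Sum>k<p. (\<Sum>l<p. Sigma1 \<mu> k l * u l)\<^sup>2)"
    using r by (simp add: eq power_mult_distrib sum_distrib_left[symmetric] real_sqrt_mult)
  also have "\<dots> \<le> r * C" using le bound r by simp
  finally show ?thesis by (simp add: r_def mult.commute)
qed

lemma quad_form:
  assumes bound: "spec_norm p (Sigma1 \<mu>) \<le> C"
  shows "(\<Sum>k<p. v k * (\<Sum>l<p. Sigma1 \<mu> k l * v l)) \<le> C * (\<Sum>l<p. (v l)\<^sup>2)"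
proof -
  have "(\<Sum>k<p. v k * (\<Sum>l<p. Sigma1 \<mu> k l * v l)) \<le> sqrt ((\<Sum>k<p. v k * (\<Sum>l<p. Sigma1 \<mu> k l * v l))\<^sup>2)"
    by (simp add: real_sqrt_abs)
  also have "\<dots> \<le> sqrt ((\<Sum>k<p. (v k)\<^sup>2) * (\<Sum>k<p. (\<Sum>l<p. Sigma1 \<mu> k l * v l)\<^sup>2))"
    by (rule real_sqrt_le_mono, rule Cauchy_Schwarz_ineq_sum)
  also have "\<dots> = sqrt (\<Sum>k<p. (v k)\<^sup>2) * sqrt (\<Sum>k<p. (\<Sum>l<p. Sigma1 \<mu> k l * v l)\<^sup>2)"
    by (simp add: real_sqrt_mult)
  also have "\<dots> \<le> sqrt (\<Sum>k<p. (v k)\<^sup>2) * (C * sqrt (\<Sum>l<p. (v l)\<^sup>2))"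
    by (rule mult_left_mono[OF spec_apply[OF bound]]) (simp add: sum_nonneg)
  also have "\<dots> = C * (\<Sum>l<p. (v l)\<^sup>2)"
    by (simp add: sum_nonneg)
  finally show ?thesis .
qed

end



context S begin
interpretation prob_space \<mu> by (rule prob)
interpretation PP: pair_prob_space \<mu> \<mu> by unfold_locales

lemma e_meas1[measurable]: "l < p \<Longrightarrow> (\<lambda>y. e x y l) \<in> borel_measurable \<mu>"
  unfolding e_def eps_fun_def sign_vec_def a_def[symmetric] by measurable

lemma e_meas2[measurable]: "l < p \<Longrightarrow> (\<lambda>x. e x y l) \<in> borel_measurable \<mu>"
  unfolding e_def eps_fun_def sign_vec_def a_def[symmetric] by measurable

lemma ae_bound: "\<bar>a u k * e x y l\<bar> \<le> 3"
proof -
  have "\<bar>a u k\<bar> * \<bar>e x y l\<bar> \<le> 1 * 3"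
    by (rule mult_mono[OF a_bound e_bound]) auto
  then show ?thesis by (simp add: abs_mult)
qed

lemma g_formula: assumes k: "k < p" and l: "l < p"
  shows "g x k l = - (\<integral>y. a y k * e x y l \<partial>\<mu>)"
proof -
  have i1: "integrable \<mu> (\<lambda>y. a x k * e x y l)"
    by (rule bint[OF prob, of _ 3]) (use l k ae_bound in auto)
  have i2: "integrable \<mu> (\<lambda>y. a y k * e x y l)"
    by (rule bint[OF prob, of _ 3]) (use l k ae_bound in auto)
  have "g x k l = (\<integral>y. a x k * e x y l - a y k * e x y l \<partial>\<mu>)"
    unfolding g_def h_def by (simp add: algebra_simps)
  also have "\<dots> = a x k * (\<integral>y. e x y l \<partial>\<mu>) - (\<integral>y. a y k * e x y l \<partial>\<mu>)"
    using i1 i2 by simp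
  also have "\<dots> = - (\<integral>y. a y k * e x y l \<partial>\<mu>)" using e_mean[OF l] by simp
  finally show ?thesis .
qed


lemma g_mean: assumes k: "k < p" and l: "l < p"
  shows "(\<integral>x. g x k l \<partial>\<mu>) = 0"
proof -
  define F where "F x y = a y k * e x y l" for x y
  have Fm: "case_prod F \<in> borel_measurable (\<mu> \<Otimes>\<^sub>M \<mu>)"
  proof -
    have "(\<lambda>z. a (snd z) k * e (fst z) (snd z) l) \<in> borel_measurable (\<mu> \<Otimes>\<^sub>M \<mu>)"
      using k l by measurable
    then show ?thesis by (simp add: F_def case_prod_beta')
  qed
  have Fi: "integrable (\<mu> \<Otimes>\<^sub>M \<mu>) (case_prod F)"
    by (rule bint[OF PP.prob_space_axioms Fm, of 3]) (auto simp: F_def ae_bound)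
  have "(\<integral>x. g x k l \<partial>\<mu>) = - (\<integral>x. \<integral>y. F x y \<partial>\<mu> \<partial>\<mu>)"
    by (simp add: g_formula[OF k l] F_def)
  also have "(\<integral>x. \<integral>y. F x y \<partial>\<mu> \<partial>\<mu>) = (\<integral>y. \<integral>x. F x y \<partial>\<mu> \<partial>\<mu>)"
    by (rule PP.Fubini_integral[OF Fi, symmetric])
  also have "\<dots> = (\<integral>y. a y k * (\<integral>x. e x y l \<partial>\<mu>) \<partial>\<mu>)"
    by (simp add: F_def)
  also have "\<dots> = (\<integral>y. a y k * (\<integral>x. - e y x l \<partial>\<mu>) \<partial>\<mu>)"
    by (rule Bochner_Integration.integral_cong[OF refl], rule arg_cong[where f="\<lambda>u. a _ k * u"],
        rule Bochner_Integration.integral_cong[OF refl], rule e_swap)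
  also have "\<dots> = 0" using e_mean[OF l] by simp
  finally show ?thesis by simp
qed

lemma jensen_sq:
  fixes f :: "'b \<Rightarrow> real"
  assumes M: "prob_space M" and f: "f \<in> borel_measurable M" and B: "\<And>x. \<bar>f x\<bar> \<le> B"
  shows "(\<integral>x. f x \<partial>M)\<^sup>2 \<le> (\<integral>x. (f x)\<^sup>2 \<partial>M)"
proof -
  interpret Q: prob_space M by (rule M)
  have i1: "integrable M f" by (rule bint[OF M f B])
  have B2: "\<bar>(f x)\<^sup>2\<bar> \<le> B\<^sup>2" for x
  proof -
    have "\<bar>f x\<bar> \<le> \<bar>B\<bar>" using B[of x] by linarith
    then have "(f x)\<^sup>2 \<le> B\<^sup>2" by (simp only: abs_le_square_iff)
    then show ?thesis by simp
  qed
  have i2: "integrable M (\<lambda>x. (f x)\<^sup>2)" by (rule bint[OF M _ B2]) (use f in measurable)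
  show ?thesis using Q.variance_eq[OF i1 i2] Q.variance_positive[of f] by simp
qed


lemma s_mean: assumes k: "k < p"
  shows "(\<integral>z. sign_vec (fst z) (snd z) k \<partial>(\<mu> \<Otimes>\<^sub>M \<mu>)) = 0"
proof -
  have m: "(\<lambda>z. sign_vec (fst z) (snd z) k) \<in> borel_measurable (\<mu> \<Otimes>\<^sub>M \<mu>)"
    unfolding sign_vec_def using k by measurable
  have i: "integrable (\<mu> \<Otimes>\<^sub>M \<mu>) (\<lambda>z. sign_vec (fst z) (snd z) k)"
    by (rule bint[OF PP.prob_space_axioms m, of 1]) (simp add: sign_vec_def abs_sgn_le)
  have "(\<integral>z. sign_vec (fst z) (snd z) k \<partial>(\<mu> \<Otimes>\<^sub>M \<mu>)) = (\<integral>y. \<integral>x. sign_vec y x k \<partial>\<mu> \<partial>\<mu>)"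
    using PP.integral_fst'[OF i] by simp
  also have "\<dots> = (\<integral>y. a y k \<partial>\<mu>)" by (simp add: a_def A_fun_def sign_vec_def)
  also have "\<dots> = 0" by (rule a_mean[OF k])
  finally show ?thesis .
qed

lemma quadA:
  assumes bound: "spec_norm p (Sigma1 \<mu>) \<le> C"
  shows "(\<integral>y. (\<Sum>k<p. v k * a y k)\<^sup>2 \<partial>\<mu>) \<le> C * (\<Sum>k<p. (v k)\<^sup>2)"
proof -
  define V where "V = (\<Sum>k<p. \<bar>v k\<bar>)"
  define F where "F y x = (\<Sum>k<p. v k * sign_vec y x k)" for y x
  have Fb: "\<bar>F y x\<bar> \<le> V" for y x
  proof -
    have "\<bar>F y x\<bar> \<le> (\<Sum>k<p. \<bar>v k * sign_vec y x k\<bar>)" unfolding F_def by (rule sum_abs)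
    also have "\<dots> \<le> V" unfolding V_def
    proof (rule sum_mono)
      fix k
      have "\<bar>v k\<bar> * \<bar>sign_vec y x k\<bar> \<le> \<bar>v k\<bar> * 1"
        by (rule mult_left_mono) (auto simp: sign_vec_def abs_sgn_le)
      then show "\<bar>v k * sign_vec y x k\<bar> \<le> \<bar>v k\<bar>" by (simp add: abs_mult)
    qed
    finally show ?thesis .
  qed
  have Fb2: "\<bar>(F y x)\<^sup>2\<bar> \<le> V\<^sup>2" for y x
  proof -
    have "\<bar>F y x\<bar> \<le> \<bar>V\<bar>" using Fb[of y x] by linarith
    then have "(F y x)\<^sup>2 \<le> V\<^sup>2" by (simp only: abs_le_square_iff)
    then show ?thesis by simp
  qed
  have Fm2: "(\<lambda>z. F (fst z) (snd z)) \<in> borel_measurable (\<mu> \<Otimes>\<^sub>M \<mu>)"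
    unfolding F_def sign_vec_def by measurable
  have Fm1: "(\<lambda>x. F y x) \<in> borel_measurable \<mu>" for y
    unfolding F_def sign_vec_def by measurable
  have Fm3: "(\<lambda>y. \<integral>x. (F y x)\<^sup>2 \<partial>\<mu>) \<in> borel_measurable \<mu>"
  proof -
    have "case_prod (\<lambda>y x. (F y x)\<^sup>2) \<in> borel_measurable (\<mu> \<Otimes>\<^sub>M \<mu>)"
      using Fm2 by (simp add: case_prod_beta')
    then show ?thesis by (rule borel_measurable_lebesgue_integral)
  qed
  have step1: "(\<Sum>k<p. v k * a y k) = (\<integral>x. F y x \<partial>\<mu>)" for y
  proof -
    have ii: "integrable \<mu> (\<lambda>x. v k * sign_vec y x k)" if "k \<in> {..<p}" for k
      by (rule bint[OF prob, of _ "\<bar>v k\<bar>"])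
        (use that in \<open>auto simp: sign_vec_def abs_mult abs_sgn_le intro: mult_left_le[of _ "\<bar>v k\<bar>", simplified]\<close>)
    have "(\<integral>x. F y x \<partial>\<mu>) = (\<Sum>k<p. \<integral>x. v k * sign_vec y x k \<partial>\<mu>)"
      unfolding F_def by (rule Bochner_Integration.integral_sum) (rule ii)
    also have "\<dots> = (\<Sum>k<p. v k * a y k)" by (simp add: a_def A_fun_def sign_vec_def)
    finally show ?thesis by simp
  qed
  have Vge: "0 \<le> V" unfolding V_def by (simp add: sum_nonneg)
  have avb: "\<bar>(\<Sum>k<p. v k * a y k)\<^sup>2\<bar> \<le> V\<^sup>2" for y
  proof -
    have "\<bar>\<Sum>k<p. v k * a y k\<bar> \<le> \<bar>V\<bar>"
      using Fb[of y] abs_int_bound[OF prob, of "F y" V] step1[of y] Vge by simp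
    then have "(\<Sum>k<p. v k * a y k)\<^sup>2 \<le> V\<^sup>2" by (simp only: abs_le_square_iff)
    then show ?thesis by simp
  qed
  have "(\<integral>y. (\<Sum>k<p. v k * a y k)\<^sup>2 \<partial>\<mu>) \<le> (\<integral>y. \<integral>x. (F y x)\<^sup>2 \<partial>\<mu> \<partial>\<mu>)"
  proof (rule integral_mono)
    show "integrable \<mu> (\<lambda>y. (\<Sum>k<p. v k * a y k)\<^sup>2)"
      by (rule bint[OF prob _ avb]) measurable
    show "integrable \<mu> (\<lambda>y. \<integral>x. (F y x)\<^sup>2 \<partial>\<mu>)"
      by (rule bint[OF prob Fm3, of "V\<^sup>2"]) (rule abs_int_bound[OF prob Fb2])
    fix y
    show "(\<Sum>k<p. v k * a y k)\<^sup>2 \<le> (\<integral>x. (F y x)\<^sup>2 \<partial>\<mu>)"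
      unfolding step1 by (rule jensen_sq[OF prob Fm1 Fb])
  qed
  also have "(\<integral>y. \<integral>x. (F y x)\<^sup>2 \<partial>\<mu> \<partial>\<mu>) = (\<integral>z. (F (fst z) (snd z))\<^sup>2 \<partial>(\<mu> \<Otimes>\<^sub>M \<mu>))"
  proof -
    have "integrable (\<mu> \<Otimes>\<^sub>M \<mu>) (\<lambda>z. (F (fst z) (snd z))\<^sup>2)"
      by (rule bint[OF PP.prob_space_axioms _ Fb2]) (use Fm2 in measurable)
    from PP.integral_fst'[OF this] show ?thesis by simp
  qed
  also have "\<dots> = (\<integral>z. (\<Sum>k<p. \<Sum>l<p. v k * v l * (sign_vec (fst z) (snd z) k * sign_vec (fst z) (snd z) l)) \<partial>(\<mu> \<Otimes>\<^sub>M \<mu>))"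
    by (simp add: F_def power2_eq_square sum_product algebra_simps)
  also have "\<dots> = (\<Sum>k<p. \<Sum>l<p. v k * v l * (\<integral>z. sign_vec (fst z) (snd z) k * sign_vec (fst z) (snd z) l \<partial>(\<mu> \<Otimes>\<^sub>M \<mu>)))"
  proof -
    have ii: "integrable (\<mu> \<Otimes>\<^sub>M \<mu>) (\<lambda>z. sign_vec (fst z) (snd z) k * sign_vec (fst z) (snd z) l)"
      if "k < p" "l < p" for k l
      by (rule bint[OF PP.prob_space_axioms, of _ 1])
         (use that in \<open>auto simp: sign_vec_def abs_mult abs_sgn_le intro: mult_le_one\<close>)
    have i2: "integrable (\<mu> \<Otimes>\<^sub>M \<mu>) (\<lambda>z. v k * v l * (sign_vec (fst z) (snd z) k * sign_vec (fst z) (snd z) l))"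
      if "k \<in> {..<p}" "l \<in> {..<p}" for k l using ii[of k l] that by simp
    have "(\<integral>z. (\<Sum>k<p. \<Sum>l<p. v k * v l * (sign_vec (fst z) (snd z) k * sign_vec (fst z) (snd z) l)) \<partial>(\<mu> \<Otimes>\<^sub>M \<mu>))
      = (\<Sum>k<p. \<integral>z. (\<Sum>l<p. v k * v l * (sign_vec (fst z) (snd z) k * sign_vec (fst z) (snd z) l)) \<partial>(\<mu> \<Otimes>\<^sub>M \<mu>))"
      by (rule Bochner_Integration.integral_sum) (auto intro!: Bochner_Integration.integrable_sum i2)
    also have "\<dots> = (\<Sum>k<p. \<Sum>l<p. \<integral>z. v k * v l * (sign_vec (fst z) (snd z) k * sign_vec (fst z) (snd z) l) \<partial>(\<mu> \<Otimes>\<^sub>M \<mu>))"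
      by (rule sum.cong[OF refl], rule Bochner_Integration.integral_sum) (use i2 in auto)
    also have "\<dots> = (\<Sum>k<p. \<Sum>l<p. v k * v l * (\<integral>z. sign_vec (fst z) (snd z) k * sign_vec (fst z) (snd z) l \<partial>(\<mu> \<Otimes>\<^sub>M \<mu>)))"
      by simp
    finally show ?thesis .
  qed
  also have "\<dots> = (\<Sum>k<p. v k * (\<Sum>l<p. Sigma1 \<mu> k l * v l))"
    by (simp add: Sigma1_def s_mean sum_distrib_left algebra_simps)
  also have "\<dots> \<le> C * (\<Sum>l<p. (v l)\<^sup>2)" by (rule quad_form[OF bound])
  finally show ?thesis .
qed


lemma g_bound:
  assumes bound: "spec_norm p (Sigma1 \<mu>) \<le> C" and l: "l < p"
  shows "(\<Sum>k<p. (g x k l)\<^sup>2) \<le> 9 * (max C 0 + 1)"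
proof -
  define D where "D = max C 0 + 1"
  have D: "D > 0" "spec_norm p (Sigma1 \<mu>) \<le> D" using bound by (auto simp: D_def)
  define v where "v k = g x k l" for k
  define N where "N = (\<Sum>k<p. (v k)\<^sup>2)"
  define u where "u y = (\<Sum>k<p. v k * a y k)" for y
  define V where "V = (\<Sum>k<p. \<bar>v k\<bar>)"
  have ub: "\<bar>u y\<bar> \<le> V" for y
  proof -
    have "\<bar>u y\<bar> \<le> (\<Sum>k<p. \<bar>v k * a y k\<bar>)" unfolding u_def by (rule sum_abs)
    also have "\<dots> \<le> V" unfolding V_def
    proof (rule sum_mono)
      fix k
      have "\<bar>v k\<bar> * \<bar>a y k\<bar> \<le> \<bar>v k\<bar> * 1"
        by (rule mult_left_mono) (auto simp: a_bound)
      then show "\<bar>v k * a y k\<bar> \<le> \<bar>v k\<bar>" by (simp add: abs_mult)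
    qed
    finally show ?thesis .
  qed
  have um: "u \<in> borel_measurable \<mu>" unfolding u_def by measurable
  have ub2: "\<bar>(u y)\<^sup>2\<bar> \<le> V\<^sup>2" for y
  proof -
    have "\<bar>u y\<bar> \<le> \<bar>V\<bar>" using ub[of y] by linarith
    then have "(u y)\<^sup>2 \<le> V\<^sup>2" by (simp only: abs_le_square_iff)
    then show ?thesis by simp
  qed
  have wb2: "\<bar>(e x y l)\<^sup>2\<bar> \<le> 9" for y
  proof -
    have "\<bar>e x y l\<bar> \<le> \<bar>3\<bar>" using e_bound[of x y l] by simp
    then have "(e x y l)\<^sup>2 \<le> 3\<^sup>2" by (simp only: abs_le_square_iff)
    then show ?thesis by simp
  qed
  have uwb: "\<bar>u y * e x y l\<bar> \<le> V * 3" for y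
    unfolding abs_mult by (rule mult_mono) (use ub e_bound order.trans[OF abs_ge_zero ub] in auto)
  have iu2: "integrable \<mu> (\<lambda>y. (u y)\<^sup>2)" by (rule bint[OF prob _ ub2]) (use um in measurable)
  have iw2: "integrable \<mu> (\<lambda>y. (e x y l)\<^sup>2)" by (rule bint[OF prob _ wb2]) (use l in measurable)
  have iuw: "integrable \<mu> (\<lambda>y. u y * e x y l)" by (rule bint[OF prob _ uwb]) (use um l in measurable)
  have iak: "integrable \<mu> (\<lambda>y. v k * (a y k * e x y l))" if "k < p" for k
  proof (rule bint[OF prob, of _ "\<bar>v k\<bar> * 3"])
    show "(\<lambda>y. v k * (a y k * e x y l)) \<in> borel_measurable \<mu>" using that l by measurable
    fix y show "\<bar>v k * (a y k * e x y l)\<bar> \<le> \<bar>v k\<bar> * 3"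
      unfolding abs_mult[of "v k"] by (rule mult_left_mono[OF ae_bound]) simp
  qed
  have "N = (\<Sum>k<p. v k * g x k l)" by (simp add: N_def v_def power2_eq_square)
  also have "\<dots> = - (\<Sum>k<p. \<integral>y. v k * (a y k * e x y l) \<partial>\<mu>)"
    by (simp add: g_formula l sum_negf)
  also have "\<dots> = - (\<integral>y. u y * e x y l \<partial>\<mu>)"
    by (subst Bochner_Integration.integral_sum[symmetric]) (use iak in \<open>auto simp: u_def sum_distrib_right mult.assoc\<close>)
  also have "\<dots> = (\<integral>y. - (u y * e x y l) \<partial>\<mu>)" by simp
  also have "\<dots> \<le> (\<integral>y. (u y)\<^sup>2 / (2 * D) + D * (e x y l)\<^sup>2 / 2 \<partial>\<mu>)"
  proof (rule integral_mono)
    show "integrable \<mu> (\<lambda>y. - (u y * e x y l))" using iuw by simp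
    show "integrable \<mu> (\<lambda>y. (u y)\<^sup>2 / (2 * D) + D * (e x y l)\<^sup>2 / 2)" using iu2 iw2 by simp
    fix y
    have "0 \<le> (u y + D * e x y l)\<^sup>2 / (2 * D)" using D by simp
    also have "(u y + D * e x y l)\<^sup>2 / (2 * D) = (u y)\<^sup>2 / (2 * D) + D * (e x y l)\<^sup>2 / 2 + u y * e x y l"
      using D by (simp add: field_simps power2_eq_square)
    finally show "- (u y * e x y l) \<le> (u y)\<^sup>2 / (2 * D) + D * (e x y l)\<^sup>2 / 2" by simp
  qed
  also have "\<dots> = (\<integral>y. (u y)\<^sup>2 \<partial>\<mu>) / (2 * D) + D * (\<integral>y. (e x y l)\<^sup>2 \<partial>\<mu>) / 2"
    using iu2 iw2 by simp
  also have "\<dots> \<le> (D * N) / (2 * D) + D * 9 / 2"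
  proof (rule add_mono)
    have "(\<integral>y. (u y)\<^sup>2 \<partial>\<mu>) \<le> D * N" unfolding u_def N_def by (rule quadA[OF D(2)])
    then show "(\<integral>y. (u y)\<^sup>2 \<partial>\<mu>) / (2 * D) \<le> (D * N) / (2 * D)" using D by (intro divide_right_mono) auto
    have "(\<integral>y. (e x y l)\<^sup>2 \<partial>\<mu>) \<le> 9" using abs_int_bound[OF prob wb2] by simp
    then show "D * (\<integral>y. (e x y l)\<^sup>2 \<partial>\<mu>) / 2 \<le> D * 9 / 2" using D by simp
  qed
  also have "\<dots> = N / 2 + D * 9 / 2" using D by simp
  finally have "N \<le> N / 2 + D * 9 / 2" .
  then have "N \<le> 9 * D" by simp
  then show ?thesis by (simp add: N_def v_def D_def)
qed

end



context S begin
interpretation prob_space \<mu> by (rule prob)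
interpretation PP: pair_prob_space \<mu> \<mu> by unfold_locales

lemma A_fun_meas[measurable]: "k < p \<Longrightarrow> (\<lambda>y. A_fun \<mu> y k) \<in> borel_measurable \<mu>"
  using A_meas unfolding a_def .

lemma h_meas1[measurable]: "k < p \<Longrightarrow> l < p \<Longrightarrow> (\<lambda>y. h x y k l) \<in> borel_measurable \<mu>"
  unfolding h_def by measurable
lemma h_meas2[measurable]: "k < p \<Longrightarrow> l < p \<Longrightarrow> (\<lambda>x. h x y k l) \<in> borel_measurable \<mu>"
  unfolding h_def by measurable

lemma g_meas[measurable]: "k < p \<Longrightarrow> l < p \<Longrightarrow> (\<lambda>x. g x k l) \<in> borel_measurable \<mu>"
  unfolding g_def
proof (rule borel_measurable_lebesgue_integral)
  assume "k < p" "l < p"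
  then have "(\<lambda>z. h (fst z) (snd z) k l) \<in> borel_measurable (\<mu> \<Otimes>\<^sub>M \<mu>)" by measurable
  then show "(\<lambda>(x, y). h x y k l) \<in> borel_measurable (\<mu> \<Otimes>\<^sub>M \<mu>)" by (simp add: case_prod_beta')
qed

lemma h_int1[simp]: "k < p \<Longrightarrow> l < p \<Longrightarrow> integrable \<mu> (\<lambda>y. h x y k l)"
  by (rule bint[OF prob _ h_bound]) measurable
lemma h_int2[simp]: "k < p \<Longrightarrow> l < p \<Longrightarrow> integrable \<mu> (\<lambda>x. h x y k l)"
  by (rule bint[OF prob _ h_bound]) measurable

lemma g_abs: "\<bar>g x k l\<bar> \<le> 6"
  unfolding g_def by (rule abs_int_bound[OF prob h_bound])

lemma hh_bound: "\<bar>h x y k l * h z w k l\<bar> \<le> 36"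
proof -
  have "\<bar>h x y k l\<bar> * \<bar>h z w k l\<bar> \<le> 6 * 6" by (rule mult_mono[OF h_bound h_bound]) auto
  then show ?thesis by (simp add: abs_mult)
qed

lemma sum_hh_bound: "\<bar>\<Sum>k<p. \<Sum>l<p. h x y k l * h z w k l\<bar> \<le> real p * real p * 36"
proof -
  have "\<bar>\<Sum>k<p. \<Sum>l<p. h x y k l * h z w k l\<bar> \<le> (\<Sum>k<p. \<bar>\<Sum>l<p. h x y k l * h z w k l\<bar>)" by (rule sum_abs)
  also have "\<dots> \<le> (\<Sum>k<p. \<Sum>l<p. \<bar>h x y k l * h z w k l\<bar>)" by (intro sum_mono sum_abs)
  also have "\<dots> \<le> (\<Sum>k<p. \<Sum>l<p. 36)" by (intro sum_mono hh_bound)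
  finally show ?thesis by simp
qed

lemma term_shared:
  assumes bound: "spec_norm p (Sigma1 \<mu>) \<le> C"
    and idx: "c < (n::nat)" "u < n" "w < n" "c \<noteq> u" "c \<noteq> w" "u \<noteq> w"
  shows "(\<integral>xs. (\<Sum>k<p. \<Sum>l<p. h (xs c) (xs u) k l * h (xs c) (xs w) k l) \<partial>PiM {..<n} (\<lambda>_. \<mu>))
      \<le> 9 * (max C 0 + 1) * real p"
proof -
  define F where "F = (\<lambda>(x, y, z). \<Sum>k<p. \<Sum>l<p. h z x k l * h z y k l)"
  have Fm: "F \<in> borel_measurable (\<mu> \<Otimes>\<^sub>M \<mu> \<Otimes>\<^sub>M \<mu>)"
  proof -
    have "(\<lambda>t. \<Sum>k<p. \<Sum>l<p. h (snd (snd t)) (fst t) k l * h (snd (snd t)) (fst (snd t)) k l) \<in> borel_measurable (\<mu> \<Otimes>\<^sub>M \<mu> \<Otimes>\<^sub>M \<mu>)"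
      unfolding h_def e_def eps_fun_def sign_vec_def a_def by measurable
    then show ?thesis by (simp add: F_def case_prod_beta')
  qed
  have "(\<integral>xs. (\<Sum>k<p. \<Sum>l<p. h (xs c) (xs u) k l * h (xs c) (xs w) k l) \<partial>PiM {..<n} (\<lambda>_. \<mu>))
     = (\<integral>xs. F (xs u, xs w, xs c) \<partial>PiM {..<n} (\<lambda>_. \<mu>))" by (simp add: F_def)
  also have "\<dots> = (\<integral>z. \<integral>y. \<integral>x. F (x, y, z) \<partial>\<mu> \<partial>\<mu> \<partial>\<mu>)"
    by (rule int3[OF prob _ _ _ _ _ _ _ Fm, of "{..<n}" u w c "real p * real p * 36"])
       (use idx in \<open>auto simp: F_def sum_hh_bound\<close>)
  also have "\<dots> = (\<integral>z. (\<Sum>k<p. \<Sum>l<p. (g z k l)\<^sup>2) \<partial>\<mu>)"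
  proof (rule Bochner_Integration.integral_cong[OF refl])
    fix z
    have inner: "(\<integral>x. F (x, y, z) \<partial>\<mu>) = (\<Sum>k<p. \<Sum>l<p. g z k l * h z y k l)" for y
    proof -
      have Fx: "F (x, y, z) = (\<Sum>k<p. \<Sum>l<p. h z x k l * h z y k l)" for x by (simp add: F_def)
      have "(\<integral>x. F (x, y, z) \<partial>\<mu>) = (\<Sum>k<p. \<integral>x. (\<Sum>l<p. h z x k l * h z y k l) \<partial>\<mu>)"
        unfolding Fx by (rule Bochner_Integration.integral_sum)
          (auto intro!: Bochner_Integration.integrable_sum bint[OF prob _ hh_bound])
      also have "\<dots> = (\<Sum>k<p. \<Sum>l<p. \<integral>x. h z x k l * h z y k l \<partial>\<mu>)"
        by (rule sum.cong[OF refl], rule Bochner_Integration.integral_sum)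
          (auto intro!: bint[OF prob _ hh_bound])
      also have "\<dots> = (\<Sum>k<p. \<Sum>l<p. g z k l * h z y k l)"
        by (simp add: g_def)
      finally show ?thesis .
    qed
    have "(\<integral>y. \<integral>x. F (x, y, z) \<partial>\<mu> \<partial>\<mu>) = (\<integral>y. (\<Sum>k<p. \<Sum>l<p. g z k l * h z y k l) \<partial>\<mu>)"
      by (simp add: inner)
    also have "\<dots> = (\<Sum>k<p. \<Sum>l<p. \<integral>y. g z k l * h z y k l \<partial>\<mu>)"
      by (subst Bochner_Integration.integral_sum)
         (auto intro!: Bochner_Integration.integrable_sum Bochner_Integration.integral_sum
           integrable_mult_right bint[OF prob _ h_bound])
    also have "\<dots> = (\<Sum>k<p. \<Sum>l<p. (g z k l)\<^sup>2)"
      by (simp add: g_def power2_eq_square integral_mult_right_zero)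
    finally show "(\<integral>y. \<integral>x. F (x, y, z) \<partial>\<mu> \<partial>\<mu>) = (\<Sum>k<p. \<Sum>l<p. (g z k l)\<^sup>2)" .
  qed
  also have "\<dots> \<le> 9 * (max C 0 + 1) * real p"
  proof -
    have b: "\<bar>\<Sum>k<p. \<Sum>l<p. (g z k l)\<^sup>2\<bar> \<le> 9 * (max C 0 + 1) * real p" for z
    proof -
      have "(\<Sum>k<p. \<Sum>l<p. (g z k l)\<^sup>2) = (\<Sum>l<p. \<Sum>k<p. (g z k l)\<^sup>2)" by (rule sum.swap)
      also have "\<dots> \<le> (\<Sum>l<p. 9 * (max C 0 + 1))" by (rule sum_mono) (rule g_bound[OF bound], simp)
      finally show ?thesis by (simp add: sum_nonneg mult.commute)
    qed
    have "\<bar>\<integral>z. (\<Sum>k<p. \<Sum>l<p. (g z k l)\<^sup>2) \<partial>\<mu>\<bar> \<le> 9 * (max C 0 + 1) * real p"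
      by (rule abs_int_bound[OF prob b])
    then show ?thesis by linarith
  qed
  finally show ?thesis .
qed


lemma g_int[simp]: "k < p \<Longrightarrow> l < p \<Longrightarrow> integrable \<mu> (\<lambda>x. g x k l)"
  by (rule bint[OF prob _ g_abs]) measurable

lemma term_disjoint:
  assumes idx: "i < (n::nat)" "j < n" "i' < n" "j' < n" "i \<noteq> j" "i \<noteq> i'" "j \<noteq> i'" "i \<noteq> j'" "j \<noteq> j'" "i' \<noteq> j'"
  shows "(\<integral>xs. (\<Sum>k<p. \<Sum>l<p. h (xs i) (xs j) k l * h (xs i') (xs j') k l) \<partial>PiM {..<n} (\<lambda>_. \<mu>)) = 0"
proof -
  define F where "F = (\<lambda>(x, y, z, w). \<Sum>k<p. \<Sum>l<p. h x y k l * h z w k l)"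
  have Fm: "F \<in> borel_measurable (\<mu> \<Otimes>\<^sub>M \<mu> \<Otimes>\<^sub>M \<mu> \<Otimes>\<^sub>M \<mu>)"
  proof -
    have "(\<lambda>t. \<Sum>k<p. \<Sum>l<p. h (fst t) (fst (snd t)) k l * h (fst (snd (snd t))) (snd (snd (snd t))) k l) \<in> borel_measurable (\<mu> \<Otimes>\<^sub>M \<mu> \<Otimes>\<^sub>M \<mu> \<Otimes>\<^sub>M \<mu>)"
      unfolding h_def e_def eps_fun_def sign_vec_def a_def by measurable
    then show ?thesis by (simp add: F_def case_prod_beta')
  qed
  have "(\<integral>xs. (\<Sum>k<p. \<Sum>l<p. h (xs i) (xs j) k l * h (xs i') (xs j') k l) \<partial>PiM {..<n} (\<lambda>_. \<mu>))
     = (\<integral>xs. F (xs i, xs j, xs i', xs j') \<partial>PiM {..<n} (\<lambda>_. \<mu>))" by (simp add: F_def)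
  also have "\<dots> = (\<integral>w. \<integral>z. \<integral>y. \<integral>x. F (x, y, z, w) \<partial>\<mu> \<partial>\<mu> \<partial>\<mu> \<partial>\<mu>)"
    by (rule int4[OF prob _ _ _ _ _ _ _ _ _ _ _ Fm, of "{..<n}" i j i' j' "real p * real p * 36"])
       (use idx in \<open>auto simp: F_def sum_hh_bound\<close>)
  also have "\<dots> = (\<integral>w. \<integral>z. 0 \<partial>\<mu> \<partial>\<mu>)"
  proof (rule Bochner_Integration.integral_cong[OF refl], rule Bochner_Integration.integral_cong[OF refl])
    fix z w
    have Fx: "F (x, y, z, w) = (\<Sum>k<p. \<Sum>l<p. h x y k l * h z w k l)" for x y by (simp add: F_def)
    have inner: "(\<integral>x. F (x, y, z, w) \<partial>\<mu>) = (\<Sum>k<p. \<Sum>l<p. g y k l * h z w k l)" for y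
    proof -
      have "(\<integral>x. F (x, y, z, w) \<partial>\<mu>) = (\<Sum>k<p. \<integral>x. (\<Sum>l<p. h x y k l * h z w k l) \<partial>\<mu>)"
        unfolding Fx by (rule Bochner_Integration.integral_sum)
          (auto intro!: Bochner_Integration.integrable_sum bint[OF prob _ hh_bound])
      also have "\<dots> = (\<Sum>k<p. \<Sum>l<p. \<integral>x. h x y k l * h z w k l \<partial>\<mu>)"
        by (rule sum.cong[OF refl], rule Bochner_Integration.integral_sum)
          (auto intro!: bint[OF prob _ hh_bound])
      also have "\<dots> = (\<Sum>k<p. \<Sum>l<p. g y k l * h z w k l)"
        by (simp add: g_def h_swap[of _ y])
      finally show ?thesis .
    qed
    have "(\<integral>y. \<integral>x. F (x, y, z, w) \<partial>\<mu> \<partial>\<mu>) = (\<integral>y. (\<Sum>k<p. \<Sum>l<p. g y k l * h z w k l) \<partial>\<mu>)"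
      by (simp add: inner)
    also have "\<dots> = (\<Sum>k<p. \<Sum>l<p. \<integral>y. g y k l * h z w k l \<partial>\<mu>)"
      by (subst Bochner_Integration.integral_sum)
         (auto intro!: Bochner_Integration.integrable_sum Bochner_Integration.integral_sum
           integrable_mult_left)
    also have "\<dots> = 0"
      by (simp add: g_mean)
    finally show "(\<integral>y. \<integral>x. F (x, y, z, w) \<partial>\<mu> \<partial>\<mu>) = 0" .
  qed
  also have "\<dots> = 0" by simp
  finally show ?thesis .
qed

lemma term_same:
  assumes idx: "i < (n::nat)" "j < n"
  shows "(\<integral>xs. (\<Sum>k<p. \<Sum>l<p. h (xs i) (xs j) k l * h (xs i) (xs j) k l) \<partial>PiM {..<n} (\<lambda>_. \<mu>))
     \<le> real p * real p * 36"
proof -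
  interpret Pn: prob_space "PiM {..<n} (\<lambda>_. \<mu>)" by (rule prob_space_PiM) (rule prob)
  have "\<bar>\<integral>xs. (\<Sum>k<p. \<Sum>l<p. h (xs i) (xs j) k l * h (xs i) (xs j) k l) \<partial>PiM {..<n} (\<lambda>_. \<mu>)\<bar>
     \<le> real p * real p * 36"
    by (rule abs_int_bound[OF Pn.prob_space_axioms sum_hh_bound])
  then show ?thesis by linarith
qed

end



context S begin
interpretation prob_space \<mu> by (rule prob)

definition "Tq n q q' xs = (\<Sum>k<p. \<Sum>l<p. h (xs (snd q)) (xs (fst q)) k l * h (xs (snd q')) (xs (fst q')) k l)"

definition "Pr n = (SIGMA j:{..<n}. {..<(j::nat)})"

definition "share q q' \<longleftrightarrow> {fst q, snd q} \<inter> {fst q', snd q'} \<noteq> ({}::nat set)"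

lemma Pr_sub: "Pr n \<subseteq> {..<n} \<times> {..<n}" by (auto simp: Pr_def)
lemma Pr_fin: "finite (Pr n)" by (auto simp: Pr_def)

lemma Tq_meas: "q \<in> Pr n \<Longrightarrow> q' \<in> Pr n \<Longrightarrow> Tq n q q' \<in> borel_measurable (PiM {..<n} (\<lambda>_. \<mu>))"
  unfolding Tq_def h_def e_def eps_fun_def sign_vec_def a_def Pr_def
  by (cases q; cases q') (simp, measurable)

lemma Tq_bound: "\<bar>Tq n q q' xs\<bar> \<le> real p * real p * 36"
  unfolding Tq_def by (rule sum_hh_bound)

lemma Tq_int:
  assumes "q \<in> Pr n" "q' \<in> Pr n"
  shows "integrable (PiM {..<n} (\<lambda>_. \<mu>)) (Tq n q q')"
  by (rule bint[OF prob_space_PiM[OF prob] Tq_meas[OF assms] Tq_bound])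

lemma Tq_le:
  assumes bound: "spec_norm p (Sigma1 \<mu>) \<le> C" and q: "q \<in> Pr n" and q': "q' \<in> Pr n"
  shows "(\<integral>xs. Tq n q q' xs \<partial>PiM {..<n} (\<lambda>_. \<mu>)) \<le>
     (if q' = q then real p * real p * 36 else 0) + (if share q q' then 9 * (max C 0 + 1) * real p else 0)"
proof -
  obtain j i where qq: "q = (j, i)" "i < j" "j < n" using q by (auto simp: Pr_def)
  obtain j' i' where qq': "q' = (j', i')" "i' < j'" "j' < n" using q' by (auto simp: Pr_def)
  have D0: "0 \<le> 9 * (max C 0 + 1) * real p" by simp
  have P0: "0 \<le> real p * real p * 36" by simp
  show ?thesis
  proof (cases "q' = q")
    case True
    have t: "(\<integral>xs. Tq n q q' xs \<partial>PiM {..<n} (\<lambda>_. \<mu>)) \<le> real p * real p * 36"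
      using term_same[of i n j] qq True by (simp add: Tq_def)
    have D0': "0 \<le> (9 * max C 0 + 9) * real p" by (intro mult_nonneg_nonneg) auto
    have t2: "(\<integral>xs. Tq n q q' xs \<partial>PiM {..<n} (\<lambda>_. \<mu>)) \<le> real p * real p * 36 + 9 * (max C 0 + 1) * real p"
      by (rule add_increasing2[OF D0 t])
    show ?thesis
    proof (cases "share q q'")
      case True
      then show ?thesis using t2 \<open>q' = q\<close> by simp
    next
      case False
      then show ?thesis using t \<open>q' = q\<close> by simp
    qed
  next
    case False
    show ?thesis
    proof (cases "share q q'")
      case sh: False
      then have "i \<noteq> i'" "i \<noteq> j'" "j \<noteq> i'" "j \<noteq> j'" using qq qq' by (auto simp: share_def)
      then have "(\<integral>xs. Tq n q q' xs \<partial>PiM {..<n} (\<lambda>_. \<mu>)) = 0"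
        using term_disjoint[of i n j i' j'] qq qq' by (simp add: Tq_def)
      then show ?thesis using D0 P0 by simp
    next
      case sh: True
      let ?B = "9 * (max C 0 + 1) * real p"
      have "(\<integral>xs. Tq n q q' xs \<partial>PiM {..<n} (\<lambda>_. \<mu>)) \<le> ?B"
      proof -
        consider "i = i'" | "j = j'" | "i = j'" | "j = i'"
          using sh qq qq' by (auto simp: share_def)
        then show ?thesis
        proof cases
          case 1
          then have "j \<noteq> j'" using False qq qq' by auto
          then show ?thesis using term_shared[OF bound, of i n j j'] qq qq' 1 by (simp add: Tq_def)
        next
          case 2
          then have "i \<noteq> i'" using False qq qq' by auto
          have eq: "Tq n q q' xs = (\<Sum>k<p. \<Sum>l<p. h (xs j) (xs i) k l * h (xs j) (xs i') k l)" for xs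
            using qq qq' 2 by (simp add: Tq_def h_swap[of "xs j'" "xs i"] h_swap[of "xs j'" "xs i'"])
          show ?thesis unfolding eq using term_shared[OF bound, of j n i i'] qq qq' 2 \<open>i \<noteq> i'\<close> by simp
        next
          case 3
          have eq: "Tq n q q' xs = (\<Sum>k<p. \<Sum>l<p. h (xs i) (xs j) k l * h (xs i) (xs i') k l)" for xs
            using qq qq' 3 by (simp add: Tq_def h_swap[of "xs i" "xs i'"] h_swap[of "xs j'" "xs i'"])
          show ?thesis unfolding eq using term_shared[OF bound, of i n j i'] qq qq' 3 by simp
        next
          case 4
          have eq: "Tq n q q' xs = (\<Sum>k<p. \<Sum>l<p. h (xs j) (xs i) k l * h (xs j) (xs j') k l)" for xs
            using qq qq' 4 by (simp add: Tq_def h_swap[of "xs j" "xs i"] h_swap[of "xs i'" "xs i"])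
          show ?thesis unfolding eq using term_shared[OF bound, of j n i j'] qq qq' 4 by simp
        qed
      qed
      then show ?thesis using False sh by simp
    qed
  qed
qed

end



context S begin

lemma M2_eq: "M2 \<mu> n xs k l = 2 / (real n * (real n - 1)) * (\<Sum>q\<in>Pr n. h (xs (snd q)) (xs (fst q)) k l)"
  unfolding M2_def Pr_def h_def e_def a_def by (simp add: sum.Sigma case_prod_beta')

lemma frob_eq: "(frob_norm p (M2 \<mu> n xs))\<^sup>2 = (2 / (real n * (real n - 1)))\<^sup>2 * (\<Sum>q\<in>Pr n. \<Sum>q'\<in>Pr n. Tq n q q' xs)"
proof -
  define c where "c = 2 / (real n * (real n - 1))"
  define H where "H q k l = h (xs (snd q)) (xs (fst q)) k l" for q k l
  have "(frob_norm p (M2 \<mu> n xs))\<^sup>2 = (\<Sum>k<p. \<Sum>l<p. (M2 \<mu> n xs k l)\<^sup>2)"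
    unfolding frob_norm_def by (simp add: sum_nonneg)
  also have "\<dots> = (\<Sum>k<p. \<Sum>l<p. c\<^sup>2 * (\<Sum>q\<in>Pr n. \<Sum>q'\<in>Pr n. H q k l * H q' k l))"
    by (simp add: M2_eq c_def H_def power_mult_distrib power2_eq_square sum_product)
  also have "\<dots> = c\<^sup>2 * (\<Sum>k<p. \<Sum>l<p. \<Sum>q\<in>Pr n. \<Sum>q'\<in>Pr n. H q k l * H q' k l)"
    by (simp add: sum_distrib_left)
  also have "(\<Sum>k<p. \<Sum>l<p. \<Sum>q\<in>Pr n. \<Sum>q'\<in>Pr n. H q k l * H q' k l)
      = (\<Sum>q\<in>Pr n. \<Sum>q'\<in>Pr n. \<Sum>k<p. \<Sum>l<p. H q k l * H q' k l)"
  proof -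
    have "(\<Sum>k<p. \<Sum>l<p. \<Sum>q\<in>Pr n. \<Sum>q'\<in>Pr n. H q k l * H q' k l)
        = (\<Sum>k<p. \<Sum>q\<in>Pr n. \<Sum>q'\<in>Pr n. \<Sum>l<p. H q k l * H q' k l)"
    proof (rule sum.cong[OF refl])
      fix k
      show "(\<Sum>l<p. \<Sum>q\<in>Pr n. \<Sum>q'\<in>Pr n. H q k l * H q' k l) = (\<Sum>q\<in>Pr n. \<Sum>q'\<in>Pr n. \<Sum>l<p. H q k l * H q' k l)"
        by (subst sum.swap) (rule sum.cong[OF refl], rule sum.swap)
    qed
    also have "\<dots> = (\<Sum>q\<in>Pr n. \<Sum>q'\<in>Pr n. \<Sum>k<p. \<Sum>l<p. H q k l * H q' k l)"
      by (subst sum.swap) (rule sum.cong[OF refl], rule sum.swap)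
    finally show ?thesis .
  qed
  finally show ?thesis by (simp add: c_def H_def Tq_def)
qed

lemma card_share: "card {q'\<in>Pr n. share q q'} \<le> 4 * n"
proof -
  let ?S = "{fst q, snd q}"
  have sub: "{q'\<in>Pr n. share q q'} \<subseteq> (?S \<times> {..<n}) \<union> ({..<n} \<times> ?S)"
    using Pr_sub by (auto simp: share_def)
  have c1: "card (?S \<times> {..<n}) \<le> 2 * n"
    by (simp add: card_cartesian_product card_insert_le_m1 mult_right_mono)
  have c2: "card ({..<n} \<times> ?S) \<le> 2 * n"
    using c1 by (simp add: card_cartesian_product mult.commute)
  have "card {q'\<in>Pr n. share q q'} \<le> card ((?S \<times> {..<n}) \<union> ({..<n} \<times> ?S))"
    by (rule card_mono[OF _ sub]) auto
  also have "\<dots> \<le> card (?S \<times> {..<n}) + card ({..<n} \<times> ?S)" by (rule card_Un_le)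
  finally show ?thesis using c1 c2 by linarith
qed


lemma E_bound:
  assumes bound: "spec_norm p (Sigma1 \<mu>) \<le> C"
  shows "(\<integral>xs. (frob_norm p (M2 \<mu> n xs))\<^sup>2 \<partial>PiM {..<n} (\<lambda>_. \<mu>))
     \<le> (2 / (real n * (real n - 1)))\<^sup>2 * (real n * real n) *
        (real p * real p * 36 + 4 * real n * (9 * (max C 0 + 1) * real p))"
proof -
  define c where "c = 2 / (real n * (real n - 1))"
  define A where "A = real p * real p * 36"
  define B where "B = 9 * (max C 0 + 1) * real p"
  have B0: "0 \<le> B" by (simp add: B_def)
  have "(\<integral>xs. (frob_norm p (M2 \<mu> n xs))\<^sup>2 \<partial>PiM {..<n} (\<lambda>_. \<mu>))
     = (\<integral>xs. c\<^sup>2 * (\<Sum>q\<in>Pr n. \<Sum>q'\<in>Pr n. Tq n q q' xs) \<partial>PiM {..<n} (\<lambda>_. \<mu>))"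
    by (simp add: frob_eq c_def)
  also have "\<dots> = c\<^sup>2 * (\<Sum>q\<in>Pr n. \<Sum>q'\<in>Pr n. \<integral>xs. Tq n q q' xs \<partial>PiM {..<n} (\<lambda>_. \<mu>))"
  proof -
    have "(\<integral>xs. (\<Sum>q\<in>Pr n. \<Sum>q'\<in>Pr n. Tq n q q' xs) \<partial>PiM {..<n} (\<lambda>_. \<mu>))
       = (\<Sum>q\<in>Pr n. \<integral>xs. (\<Sum>q'\<in>Pr n. Tq n q q' xs) \<partial>PiM {..<n} (\<lambda>_. \<mu>))"
      by (rule Bochner_Integration.integral_sum) (auto intro!: Bochner_Integration.integrable_sum Tq_int)
    also have "\<dots> = (\<Sum>q\<in>Pr n. \<Sum>q'\<in>Pr n. \<integral>xs. Tq n q q' xs \<partial>PiM {..<n} (\<lambda>_. \<mu>))"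
      by (rule sum.cong[OF refl], rule Bochner_Integration.integral_sum) (auto intro!: Tq_int)
    finally show ?thesis by simp
  qed
  also have "\<dots> \<le> c\<^sup>2 * (\<Sum>q\<in>Pr n. \<Sum>q'\<in>Pr n. (if q' = q then A else 0) + (if share q q' then B else 0))"
  proof (rule mult_left_mono)
    show "(\<Sum>q\<in>Pr n. \<Sum>q'\<in>Pr n. \<integral>xs. Tq n q q' xs \<partial>PiM {..<n} (\<lambda>_. \<mu>))
      \<le> (\<Sum>q\<in>Pr n. \<Sum>q'\<in>Pr n. (if q' = q then A else 0) + (if share q q' then B else 0))"
    proof (rule sum_mono, rule sum_mono)
      fix q q' assume "q \<in> Pr n" "q' \<in> Pr n"
      then show "(\<integral>xs. Tq n q q' xs \<partial>PiM {..<n} (\<lambda>_. \<mu>)) \<le> (if q' = q then A else 0) + (if share q q' then B else 0)"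
        unfolding A_def B_def by (rule Tq_le[OF bound])
    qed
  qed simp
  also have "\<dots> \<le> c\<^sup>2 * (\<Sum>q\<in>Pr n. A + 4 * real n * B)"
  proof (intro mult_left_mono sum_mono)
    fix q assume q: "q \<in> Pr n"
    have s1: "(\<Sum>q'\<in>Pr n. if q' = q then A else 0) = A" using q Pr_fin[of n] by (simp add: sum.delta)
    have s2: "(\<Sum>q'\<in>Pr n. if share q q' then B else 0) = real (card {q'\<in>Pr n. share q q'}) * B"
      by (simp add: sum.inter_filter[symmetric, OF Pr_fin])
    have "(\<Sum>q'\<in>Pr n. (if q' = q then A else 0) + (if share q q' then B else 0))
        = A + real (card {q'\<in>Pr n. share q q'}) * B"
      by (simp only: sum.distrib s1 s2)
    also have "\<dots> \<le> A + 4 * real n * B"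
      using card_share[of n q] B0 by (intro add_left_mono mult_right_mono) auto
    finally show "(\<Sum>q'\<in>Pr n. (if q' = q then A else 0) + (if share q q' then B else 0)) \<le> A + 4 * real n * B" .
  qed simp
  also have "\<dots> = c\<^sup>2 * (real (card (Pr n)) * (A + 4 * real n * B))" by simp
  also have "\<dots> \<le> c\<^sup>2 * ((real n * real n) * (A + 4 * real n * B))"
  proof -
    have "card (Pr n) \<le> card ({..<n} \<times> {..<n})" by (rule card_mono[OF _ Pr_sub]) auto
    then have "real (card (Pr n)) \<le> real n * real n" by (simp add: card_cartesian_product) (metis of_nat_le_iff of_nat_mult)
    moreover have "0 \<le> A + 4 * real n * B" using B0 by (simp add: A_def)
    ultimately show ?thesis by (intro mult_left_mono mult_right_mono) auto
  qed
  finally show ?thesis by (simp add: c_def A_def B_def mult.assoc)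
qed

end



lemma aux_lim: "(\<lambda>n. real n / (real n - 1)\<^sup>2) \<longlonglongrightarrow> 0"
  by real_asymp

lemma alg_id:
  fixes N m P D :: real
  assumes "N \<noteq> 0" "m \<noteq> 0" "P \<noteq> 0"
  shows "(1 / P) * ((2 / (N * m))\<^sup>2 * (N * N) * (P * P * 36 + 4 * N * (9 * D * P)))
       = 144 * ((P / N) * (N / m\<^sup>2) + D * (N / m\<^sup>2))"
  using assms by (simp add: field_simps power2_eq_square)

theorem lemma2:
  fixes p :: "nat \<Rightarrow> nat" and \<mu> :: "nat \<Rightarrow> (nat \<Rightarrow> real) measure"
    and C c :: real
  assumes prob: "\<And>n. prob_space (\<mu> n)"
    and sets: "\<And>n. sets (\<mu> n) = sets (PiM {..<p n} (\<lambda>_. borel))"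
    and abs_cont: "\<And>n. absolutely_continuous (PiM {..<p n} (\<lambda>_. lborel)) (\<mu> n)"
    and bound: "\<And>n. spec_norm (p n) (Sigma1 (\<mu> n)) \<le> C"
    and p_inf: "filterlim p at_top sequentially"
    and ratio: "(\<lambda>n. real (p n) / real n) \<longlonglongrightarrow> c"
    and c_pos: "c > 0"
  shows "(\<lambda>n. (1 / real (p n)) *
            (\<integral>xs. (frob_norm (p n) (M2 (\<mu> n) n xs))\<^sup>2 \<partial>(PiM {..<n} (\<lambda>_. \<mu> n))))
           \<longlonglongrightarrow> 0"
proof -
  define D where "D = max C 0 + 1"
  define E where "E n = (\<integral>xs. (frob_norm (p n) (M2 (\<mu> n) n xs))\<^sup>2 \<partial>(PiM {..<n} (\<lambda>_. \<mu> n)))" for n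
  define U where "U n = 144 * ((real (p n) / real n) * (real n / (real n - 1)\<^sup>2) + D * (real n / (real n - 1)\<^sup>2))" for n
  have S: "S (\<mu> n) (p n)" for n by (simp add: S_def prob sets)
  have Eb: "E n \<le> (2 / (real n * (real n - 1)))\<^sup>2 * (real n * real n) *
        (real (p n) * real (p n) * 36 + 4 * real n * (9 * D * real (p n)))" for n
    unfolding E_def D_def by (rule S.E_bound[OF S bound])
  have E0: "0 \<le> E n" for n unfolding E_def by (rule integral_nonneg_AE) simp
  have U0: "U \<longlonglongrightarrow> 144 * (c * 0 + D * 0)"
    unfolding U_def by (intro tendsto_intros ratio aux_lim)
  have ev: "eventually (\<lambda>n. 1 \<le> p n \<and> 2 \<le> n) sequentially"
  proof (rule eventually_conj)
    show "eventually (\<lambda>n. 1 \<le> p n) sequentially"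
      using filterlim_at_top[THEN iffD1, OF p_inf, rule_format, of 1] by simp
  qed (rule eventually_ge_at_top)
  have "(\<lambda>n. (1 / real (p n)) * E n) \<longlonglongrightarrow> 0"
  proof (rule tendsto_sandwich[where f="\<lambda>_. 0" and h=U])
    show "eventually (\<lambda>n. 0 \<le> (1 / real (p n)) * E n) sequentially"
      using E0 by simp
    show "eventually (\<lambda>n. (1 / real (p n)) * E n \<le> U n) sequentially"
      using ev
    proof eventually_elim
      case (elim n)
      then have pn: "real (p n) \<ge> 1" and nn: "real n \<ge> 2" by auto
      have D0: "D > 0" by (simp add: D_def)
      have "(1 / real (p n)) * E n \<le> (1 / real (p n)) * ((2 / (real n * (real n - 1)))\<^sup>2 * (real n * real n) *
        (real (p n) * real (p n) * 36 + 4 * real n * (9 * D * real (p n))))"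
        by (rule mult_left_mono[OF Eb]) simp
      also have "\<dots> = U n"
      proof -
        have a1: "real n - 1 \<noteq> 0" "real n \<noteq> 0" "real (p n) \<noteq> 0" using pn nn by auto
        show ?thesis unfolding U_def by (rule alg_id[OF a1(2) a1(1) a1(3)])
      qed
      finally show ?case .
    qed
  qed (simp_all add: U0[simplified])
  then show ?thesis by (simp add: E_def)
qed

end
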